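(* Let $0<q<1$, $\tau,\sigma\in\mathbb{R}$ and $\phi\in[0,2\pi)$. Let $\{e_n\}_{n\in\mathbb{Z}_+}$ be the standard orthonormal basis of $\ell^2(\mathbb{Z}_+)$ (with $e_{-1}=0$), and define bounded operators $A,C$ on $\ell^2(\mathbb{Z}_+)$ by $Ae_n=\sqrt{1-q^{2n}}\,e_{n-1}$, $Ce_n=e^{i\phi}q^ne_n$. Let $$R=\tfrac12\Big(A^2+(A^* )^2+qC^2+q(C^* )^2+iq(q^{-\sigma}-q^{\sigma})(A^*C-C^*A)-iq(q^{-\tau}-q^{\tau})(CA-A^*C^* )-q(q^{-\sigma}-q^{\sigma})(q^{-\tau}-q^{\tau})C^*C\Big).$$ For $\lambda\in\{-q^{2k}\mid k\in\mathbb{Z}_+\}\cup\{q^{2\tau+2k}\mid k\in\mathbb{Z}_+\}$ let $$v_\lambda^\phi=\sum_{n=0}^\infty i^n e^{in\phi}p_n(\lambda)e_n,\qquad p_n(\lambda)=\frac{q^{-n\tau}q^{\frac12 n(n-1)}}{\sqrt{(q^2;q^2)_n}}\;{}_2\varphi_1\!\left(q^{-2n},\,q^{2\tau}/\lambda;\,0;\,q^2,\,-q^2\lambda\right).$$ Then for every such $\lambda$, $$2Rv_\lambda^\phi=qe^{-2i\phi}v^\phi_{\lambda q^2}+q^{-1}e^{2i\phi}(1-q^{-2\tau}\lambda)(1+\lambda)v^\phi_{\lambda/q^2}+\lambda q^{1-\tau}(q^{-\sigma}-q^{\sigma})v^\phi_\lambda,$$ where the middle term is interpreted as $0$ when its coefficient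 vanishes (i.e. for $\lambda=-1$ and $\lambda=q^{2\tau}$).
   Context: $R$ is the image of the element $\rho_{\tau,\sigma}$ of the quantum $SU(2)$ $C^*$-algebra under the representation $\pi_\phi$ ($\alpha\mapsto A$, $\gamma\mapsto C$). For $k\in\mathbb{Z}_+\cup\{\infty\}$, $(a;q)_k=\prod_{i=0}^{k-1}(1-aq^i)$, and ${}_2\varphi_1(a,b;c;p,z)=\sum_{j\ge0}\frac{(a;p)_j(b;p)_j}{(p;p)_j(c;p)_j}z^j$. The vectors $v_\lambda^\phi$ lie in $\ell^2(\mathbb{Z}_+)$ and form an orthogonal basis of it. *)

theory Defs
  imports "HOL-Analysis.Analysis"
begin

text \<open>Vectors of l2(Z+) are represented by their coordinate sequences nat => complex;
  the operators A, C (and adjoints) act on coordinates exactly as the bounded operators do.\<close>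

definition qpoch :: "complex \<Rightarrow> complex \<Rightarrow> nat \<Rightarrow> complex" where
  "qpoch a p k = (\<Prod>i<k. 1 - a * p ^ i)"

definition phi21 :: "complex \<Rightarrow> complex \<Rightarrow> complex \<Rightarrow> complex \<Rightarrow> complex \<Rightarrow> complex" where
  "phi21 a b c p z = (\<Sum>j. qpoch a p j * qpoch b p j / (qpoch p p j * qpoch c p j) * z ^ j)"

text \<open>A e_n = sqrt(1-q^(2n)) e_(n-1), so (A x)_n = sqrt(1-q^(2n+2)) x_(n+1).\<close>
definition opA :: "real \<Rightarrow> (nat \<Rightarrow> complex) \<Rightarrow> nat \<Rightarrow> complex" where
  "opA q x n = complex_of_real (sqrt (1 - q ^ (2 * (n + 1)))) * x (n + 1)"

definition opAadj :: "real \<Rightarrow> (nat \<Rightarrow> complex) \<Rightarrow> nat \<Rightarrow> complex" where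
  "opAadj q x n = (if n = 0 then 0 else complex_of_real (sqrt (1 - q ^ (2 * n))) * x (n - 1))"

definition opC :: "real \<Rightarrow> real \<Rightarrow> (nat \<Rightarrow> complex) \<Rightarrow> nat \<Rightarrow> complex" where
  "opC q \<phi> x n = exp (\<i> * complex_of_real \<phi>) * complex_of_real (q ^ n) * x n"

definition opCadj :: "real \<Rightarrow> real \<Rightarrow> (nat \<Rightarrow> complex) \<Rightarrow> nat \<Rightarrow> complex" where
  "opCadj q \<phi> x n = exp (- \<i> * complex_of_real \<phi>) * complex_of_real (q ^ n) * x n"

definition opR :: "real \<Rightarrow> real \<Rightarrow> real \<Rightarrow> real \<Rightarrow> (nat \<Rightarrow> complex) \<Rightarrow> nat \<Rightarrow> complex" where
  "opR q \<tau> \<sigma> \<phi> x n =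
     (let A = opA q; Ad = opAadj q; C = opC q \<phi>; Cd = opCadj q \<phi>;
          s = complex_of_real (q powr (- \<sigma>) - q powr \<sigma>);
          t = complex_of_real (q powr (- \<tau>) - q powr \<tau>);
          qc = complex_of_real q
      in (1/2) * ( A (A x) n + Ad (Ad x) n + qc * C (C x) n + qc * Cd (Cd x) n
          + \<i> * qc * s * (Ad (C x) n - Cd (A x) n)
          - \<i> * qc * t * (C (A x) n - Ad (Cd x) n)
          - qc * s * t * Cd (C x) n))"

definition pn :: "real \<Rightarrow> real \<Rightarrow> nat \<Rightarrow> real \<Rightarrow> complex" where
  "pn q \<tau> n lam =
     complex_of_real (q powr (- real n * \<tau>) * q powr (real n * (real n - 1) / 2))
     / csqrt (qpoch (complex_of_real (q^2)) (complex_of_real (q^2)) n)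
     * phi21 (complex_of_real (q powr (- 2 * real n))) (complex_of_real (q powr (2 * \<tau>) / lam)) 0
             (complex_of_real (q^2)) (complex_of_real (- (q^2) * lam))"

definition vvec :: "real \<Rightarrow> real \<Rightarrow> real \<Rightarrow> real \<Rightarrow> nat \<Rightarrow> complex" where
  "vvec q \<tau> \<phi> lam n = \<i> ^ n * exp (\<i> * of_nat n * complex_of_real \<phi>) * pn q \<tau> n lam"

end

theory Submission
  imports Defs
begin


definition uu :: "real \<Rightarrow> nat \<Rightarrow> nat \<Rightarrow> real" where
  "uu Q m j = (\<Prod>i<j. 1 - Q^i / Q^m)"
definition dd :: "real \<Rightarrow> nat \<Rightarrow> real" where
  "dd Q j = (\<Prod>i<j. 1 - Q^(Suc i))"
definition AA :: "real \<Rightarrow> nat \<Rightarrow> nat \<Rightarrow> real" where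
  "AA Q m j = (-Q)^j * uu Q m j / dd Q j"
definition ph :: "real \<Rightarrow> real \<Rightarrow> nat \<Rightarrow> real \<Rightarrow> real" where
  "ph Q b j lam = (\<Prod>i<j. lam - b * Q^i)"
definition PP :: "real \<Rightarrow> real \<Rightarrow> nat \<Rightarrow> real \<Rightarrow> real" where
  "PP Q b m lam = (\<Sum>j<Suc m. AA Q m j * ph Q b j lam)"

lemma uu_0[simp]: "uu Q m 0 = 1" by (simp add: uu_def)
lemma dd_0[simp]: "dd Q 0 = 1" by (simp add: dd_def)
lemma ph_0[simp]: "ph Q b 0 lam = 1" by (simp add: ph_def)
lemma AA_0[simp]: "AA Q m 0 = 1" by (simp add: AA_def)
lemma uu_Suc: "uu Q m (Suc j) = uu Q m j * (1 - Q^j / Q^m)" by (simp add: uu_def)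
lemma dd_Suc: "dd Q (Suc j) = dd Q j * (1 - Q^(Suc j))" by (simp add: dd_def)
lemma ph_Suc: "ph Q b (Suc j) lam = ph Q b j lam * (lam - b * Q^j)" by (simp add: ph_def)

lemma dd_pos: assumes "0 < Q" "Q < 1" shows "dd Q j > 0"
proof -
  have "Q^(Suc i) < 1" for i using assms power_less_one_iff[of Q "Suc i"] by simp
  then show ?thesis unfolding dd_def by (intro prod_pos) auto
qed

lemma uu_vanish: assumes "Q \<noteq> 0" "m < j" shows "uu Q m j = 0"
  unfolding uu_def using assms by (intro prod_zero) (auto intro!: bexI[of _ m])

lemma AA_vanish: assumes "Q \<noteq> 0" "m < j" shows "AA Q m j = 0"
  using uu_vanish[OF assms] by (simp add: AA_def)

lemma uu_L3: assumes "Q \<noteq> 0" shows "Q^m * uu Q m (Suc j) = (Q^m - 1) * uu Q (m-1) j"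
proof (cases m)
  case 0 then show ?thesis using uu_vanish[OF assms, of 0 "Suc j"] by simp
next
  case (Suc k)
  have "uu Q m (Suc j) = (1 - 1 / Q^m) * (\<Prod>i<j. 1 - Q^(Suc i) / Q^m)"
    unfolding uu_def by (simp only: prod.lessThan_Suc_shift) simp
  also have "(\<Prod>i<j. 1 - Q^(Suc i) / Q^m) = uu Q k j"
    unfolding uu_def Suc using assms by (intro prod.cong) auto
  finally show ?thesis using assms Suc by (simp add: field_simps)
qed

lemma uu_L1: assumes "Q \<noteq> 0" shows "(Q^m - 1) * uu Q (m-1) j = (Q^m - Q^j) * uu Q m j"
proof -
  have "Q^m * uu Q m (Suc j) = Q^m * uu Q m j - Q^j * uu Q m j"
    using uu_Suc[of Q m j] assms by (simp add: field_simps)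
  then show ?thesis using uu_L3[OF assms, of m j] by (simp add: algebra_simps)
qed

lemma PP_ext: assumes "Q \<noteq> 0" "m < N" shows "PP Q b m lam = (\<Sum>j<N. AA Q m j * ph Q b j lam)"
  unfolding PP_def using assms AA_vanish[OF assms(1)]
  by (intro sum.mono_neutral_left) auto

lemma sum_shift1: "(\<Sum>j<N. f j * g (Suc j)) = (\<Sum>k<Suc N. (if k = 0 then 0 else f (k - 1)) * (g k :: real))"
  by (simp only: sum.lessThan_Suc_shift) simp


lemma coef0_abs:
  fixes Q x y b U V W Z c dj A1 Am A0 Aj :: real
  assumes h1: "(Q*x - 1)*W = (Q*x - Q*y)*U"
    and h2: "(x - 1)*V = (x - Q*y)*W"
    and h3: "Q*x*U = (Q*x - 1)*Z"
    and nz: "Q*x \<noteq> 1" "dj \<noteq> 0" "1 - Q*y \<noteq> 0"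
    and a1: "A1 * (dj*(1-Q*y)) = c*(-Q)*U"
    and a2: "Am * (dj*(1-Q*y)) = c*(-Q)*V"
    and a3: "A0 * (dj*(1-Q*y)) = c*(-Q)*W"
    and a4: "Aj * dj = c*Z"
  shows "x*A1 + b*(1-x)*Am - (1-b)*x*A0 - b*(Q*y)*A0 - Aj = 0"
  using assms by algebra

lemma coefm_abs:
  fixes Q x x' y b W W1 V V2 c dk A0 A1 Am Am2 :: real
  assumes h2: "(x - 1)*V = (x - y)*W"
    and h4: "(x' - 1)*V2 = (x' - y)*V"
    and hx: "x = Q*x'"
    and hw: "x*W1 = (x-y)*W"
    and nz: "dk \<noteq> 0" "1 - Q*y \<noteq> 0"
    and a0: "A0 * dk = c*W"
    and a1: "A1 * (dk*(1-Q*y)) = c*(-Q)*W1"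
    and a2: "Am * dk = c*V"
    and a3: "Am2 * dk = c*V2"
  shows "x*(y*A0 + b*(Q*y^2 - y)*A1) = x^2*A0 + (1-b)*(1-x)*x*Am - b*Q*(1-x)*(1-x')*Am2"
  using assms by algebra

lemma coefp_abs:
  fixes Q x z b U c r dj a be e f :: real
  assumes nz: "a \<noteq> 0" "be \<noteq> 0" "dj \<noteq> 0" "e \<noteq> 0" "f \<noteq> 0" "Q \<noteq> 0" "z \<noteq> 0"
    and hd: "a = Q*x - 1" "be = Q^2*x-1" "e = 1 - Q*z" "f = 1 - Q^2*z"
  shows "-((c*(Q*x*(Q^2*x*U/be)/a)/dj)*(1/z) + (c*(-Q)*(Q*x*((Q^2*x - Q^2*z)*U/be)/a)/(dj*e))*((1/z)/Q)*(1 + b*(Q^2*z))) = Q*x*(b*(c*Q^2*((Q*x-Q^2*z)*((Q^2*x - Q^2*z)*U/be)/a)/(dj*e*f)) + (1-b)*(c*Q^2*((Q^2*x - Q^2*z)*U/be)/(dj*e*f)) - (c*Q^2*U/(dj*e*f)))"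
proof -
  have "-((c*(Q*x*(Q^2*x*U/be)/a)/dj)*(1/z) + (c*(-Q)*(Q*x*((Q^2*x - Q^2*z)*U/be)/a)/(dj*e))*((1/z)/Q)*(1 + b*(Q^2*z))) 
     = c*Q^3*x*U/(dj*a*be*e*f*z) * (-(x*e - (x-z)*(1+b*Q^2*z))*f)"
    using nz by (simp add: field_simps) algebra
  also have "(-(x*e - (x-z)*(1+b*Q^2*z))*f) = z*(b*Q^3*(x-z)*(x-Q*z) + (1-b)*Q^2*(x-z)*a - a*be)"
    unfolding hd by algebra
  also have "c*Q^3*x*U/(dj*a*be*e*f*z) * (z*(b*Q^3*(x-z)*(x-Q*z) + (1-b)*Q^2*(x-z)*a - a*be)) = Q*x*(b*(c*Q^2*((Q*x-Q^2*z)*((Q^2*x - Q^2*z)*U/be)/a)/(dj*e*f)) + (1-b)*(c*Q^2*((Q^2*x - Q^2*z)*U/be)/(dj*e*f)) - (c*Q^2*U/(dj*e*f)))"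
    using nz by (simp add: field_simps) algebra
  finally show ?thesis .
qed


lemma AA_eq: assumes "0 < Q" "Q < 1" shows "AA Q m j * dd Q j = (-Q)^j * uu Q m j"
  using dd_pos[OF assms, of j] by (simp add: AA_def)

lemma pow_ne1: fixes Q :: real assumes "0 < Q" "Q < 1" "0 < k" shows "Q^k \<noteq> 1" "1 - Q^k \<noteq> 0"
  using assms power_less_one_iff[of Q k] by auto

lemma AA_Suc_eq: assumes "0 < Q" "Q < 1"
  shows "AA Q m (Suc j) * (dd Q j * (1 - Q*Q^j)) = (-Q)^j * (-Q) * uu Q m (Suc j)"
proof -
  have "dd Q j \<noteq> 0" using dd_pos[OF assms, of j] by simp
  moreover have "1 - Q*Q^j \<noteq> 0" using pow_ne1[OF assms, of "Suc j"] by simp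
  ultimately show ?thesis by (simp add: AA_def dd_Suc)
qed

lemma AA_SS_eq: assumes "0 < Q" "Q < 1"
  shows "AA Q m (Suc (Suc j)) * (dd Q j * (1 - Q*Q^j) * (1 - Q^2*Q^j)) = (-Q)^j * Q^2 * uu Q m (Suc (Suc j))"
proof -
  have dD: "dd Q (Suc (Suc j)) = dd Q j * (1 - Q*Q^j) * (1 - Q^2*Q^j)"
    by (simp add: dd_Suc power2_eq_square mult.assoc)
  have "dd Q (Suc (Suc j)) \<noteq> 0" using dd_pos[OF assms, of "Suc (Suc j)"] by simp
  then have nz: "dd Q j * (1 - Q*Q^j) * (1 - Q^2*Q^j) \<noteq> 0" using dD by simp
  show ?thesis unfolding AA_def dD using nz by (simp add: power2_eq_square)
qed

lemma coef0: assumes "0 < Q" "Q < 1"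
  shows "Q^n * AA Q (Suc n) k + b*(1 - Q^n) * AA Q (n-1) k - (1-b)*Q^n * AA Q n k
     - b*Q^k * AA Q n k - (if k = 0 then 0 else AA Q n (k-1)) = 0"
proof (cases k)
  case 0 then show ?thesis by (simp add: algebra_simps)
next
  case (Suc j)
  have Q0: "Q \<noteq> 0" using assms by simp
  have h1: "(Q*Q^n - 1)*uu Q n (Suc j) = (Q*Q^n - Q*Q^j)*uu Q (Suc n) (Suc j)"
    using uu_L1[OF Q0, of "Suc n" "Suc j"] by simp
  have h2: "(Q^n - 1)*uu Q (n-1) (Suc j) = (Q^n - Q*Q^j)*uu Q n (Suc j)"
    using uu_L1[OF Q0, of n "Suc j"] by simp
  have h3: "Q*Q^n*uu Q (Suc n) (Suc j) = (Q*Q^n - 1)*uu Q n j"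
    using uu_L3[OF Q0, of "Suc n" j] by simp
  have nz1: "Q*Q^n \<noteq> 1" using assms power_less_one_iff[of Q "Suc n"] by simp
  have nz2: "dd Q j \<noteq> 0" using dd_pos[OF assms] by (metis less_irrefl)
  have nz3: "1 - Q*Q^j \<noteq> 0" using assms power_less_one_iff[of Q "Suc j"] by simp
  have "Q^n * AA Q (Suc n) (Suc j) + b*(1-Q^n)*AA Q (n-1) (Suc j) - (1-b)*Q^n*AA Q n (Suc j)
      - b*(Q*Q^j)*AA Q n (Suc j) - AA Q n j = 0"
    by (rule coef0_abs[OF h1 h2 h3 nz1 nz2 nz3 AA_Suc_eq[OF assms] AA_Suc_eq[OF assms]
          AA_Suc_eq[OF assms] AA_eq[OF assms]])
  then show ?thesis using Suc by simp
qed

lemma PP_E0: assumes "0 < Q" "Q < 1"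
  shows "Q^n * PP Q b (Suc n) lam + b*(1-Q^n)*PP Q b (n-1) lam - (1-b)*Q^n*PP Q b n lam
       = lam * PP Q b n lam"
proof -
  have Q0: "Q \<noteq> 0" using assms by simp
  define N where "N = Suc (Suc n)"
  have l: "lam * ph Q b j lam = ph Q b (Suc j) lam + b*Q^j*ph Q b j lam" for j
    by (simp add: ph_Suc algebra_simps)
  have pe: "PP Q b n lam = (\<Sum>j<N. AA Q n j * ph Q b j lam)"
    by (rule PP_ext[OF Q0]) (simp add: N_def)
  have "lam * PP Q b n lam = (\<Sum>j<N. AA Q n j * (lam * ph Q b j lam))"
    unfolding pe by (simp add: sum_distrib_left ac_simps)
  also have "\<dots> = (\<Sum>j<N. AA Q n j * ph Q b (Suc j) lam + b*Q^j*AA Q n j * ph Q b j lam)"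
    unfolding l by (simp add: algebra_simps)
  also have "\<dots> = (\<Sum>j<N. AA Q n j * ph Q b (Suc j) lam) + (\<Sum>j<N. b*Q^j*AA Q n j * ph Q b j lam)"
    by (simp add: sum.distrib)
  also have "(\<Sum>j<N. b*Q^j*AA Q n j * ph Q b j lam) = (\<Sum>j<Suc N. b*Q^j*AA Q n j * ph Q b j lam)"
    using AA_vanish[OF Q0, of n N] by (simp add: N_def)
  also have "(\<Sum>j<N. AA Q n j * ph Q b (Suc j) lam) = (\<Sum>k<Suc N. (if k = 0 then 0 else AA Q n (k-1)) * ph Q b k lam)"
    by (rule sum_shift1)
  finally have s1: "lam * PP Q b n lam = (\<Sum>k<Suc N. (if k = 0 then 0 else AA Q n (k-1)) * ph Q b k lam) + (\<Sum>j<Suc N. b*Q^j*AA Q n j * ph Q b j lam)" .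
  have p1: "PP Q b (Suc n) lam = (\<Sum>k<Suc N. AA Q (Suc n) k * ph Q b k lam)"
    by (rule PP_ext[OF Q0]) (simp add: N_def)
  have p2: "PP Q b (n-1) lam = (\<Sum>k<Suc N. AA Q (n-1) k * ph Q b k lam)"
    by (rule PP_ext[OF Q0]) (simp add: N_def)
  have p3: "PP Q b n lam = (\<Sum>k<Suc N. AA Q n k * ph Q b k lam)"
    by (rule PP_ext[OF Q0]) (simp add: N_def)
  have "Q^n * PP Q b (Suc n) lam + b*(1-Q^n)*PP Q b (n-1) lam - (1-b)*Q^n*PP Q b n lam - lam * PP Q b n lam
     = (\<Sum>k<Suc N. (Q^n * AA Q (Suc n) k + b*(1 - Q^n) * AA Q (n-1) k - (1-b)*Q^n * AA Q n k
     - b*Q^k * AA Q n k - (if k = 0 then 0 else AA Q n (k-1))) * ph Q b k lam)"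
    unfolding s1 unfolding p1 p2 p3
    by (simp add: sum_distrib_left sum.distrib sum_subtractf algebra_simps)
  also have "\<dots> = 0" using coef0[OF assms] by simp
  finally show ?thesis by simp
qed



lemma ph_scale: "(\<Prod>i<j. Q*lam - b*Q^(Suc i)) = Q^j * ph Q b j lam"
  by (induct j) (simp_all add: ph_Suc algebra_simps)

lemma ph_Q: "ph Q b (Suc j) (Q*lam) = Q^(Suc j) * ph Q b (Suc j) lam + b*(Q^(2*j+1) - Q^j) * ph Q b j lam"
proof -
  have "ph Q b (Suc j) (Q*lam) = (Q*lam - b) * (\<Prod>i<j. Q*lam - b*Q^(Suc i))"
    unfolding ph_def by (simp only: prod.lessThan_Suc_shift) simp
  also have "\<dots> = (Q*lam - b) * Q^j * ph Q b j lam" by (simp only: ph_scale mult.assoc)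
  finally have eq: "ph Q b (Suc j) (Q*lam) = (Q*lam - b) * Q^j * ph Q b j lam" .
  show ?thesis unfolding eq by (simp add: ph_Suc[of Q b j lam] algebra_simps power_add power_mult_distrib mult_2 mult_2_right)
qed

lemma PPQ: assumes "Q \<noteq> 0"
  shows "PP Q b n (Q*lam) = (\<Sum>k<Suc n. (Q^k * AA Q n k + b*(Q^(2*k+1) - Q^k)*AA Q n (Suc k)) * ph Q b k lam)"
proof -
  have e1: "PP Q b n (Q*lam) = AA Q n 0 + (\<Sum>i<n. AA Q n (Suc i) * ph Q b (Suc i) (Q*lam))"
    unfolding PP_def by (simp only: sum.lessThan_Suc_shift) simp
  have e2: "(\<Sum>i<n. AA Q n (Suc i) * ph Q b (Suc i) (Q*lam)) = (\<Sum>i<n. Q^(Suc i) * AA Q n (Suc i) * ph Q b (Suc i) lam)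
      + (\<Sum>i<n. b*(Q^(2*i+1) - Q^i) * AA Q n (Suc i) * ph Q b i lam)"
    unfolding sum.distrib[symmetric] by (rule sum.cong) (simp_all add: ph_Q algebra_simps)
  have e3: "AA Q n 0 + (\<Sum>i<n. Q^(Suc i) * AA Q n (Suc i) * ph Q b (Suc i) lam)
      = (\<Sum>k<Suc n. Q^k * AA Q n k * ph Q b k lam)"
    by (simp only: sum.lessThan_Suc_shift) simp
  have e4: "(\<Sum>i<n. b*(Q^(2*i+1) - Q^i) * AA Q n (Suc i) * ph Q b i lam)
      = (\<Sum>k<Suc n. b*(Q^(2*k+1) - Q^k) * AA Q n (Suc k) * ph Q b k lam)"
    using AA_vanish[OF assms, of n "Suc n"] by simp
  have "PP Q b n (Q*lam) = (\<Sum>k<Suc n. Q^k * AA Q n k * ph Q b k lam) + (\<Sum>k<Suc n. b*(Q^(2*k+1) - Q^k) * AA Q n (Suc k) * ph Q b k lam)"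
    unfolding e1 e2 e4 e3[symmetric] by (simp only: add.assoc)
  then show ?thesis by (simp only: distrib_right sum.distrib)
qed

lemma coefm: assumes "0 < Q" "Q < 1" "n = Suc m"
  shows "Q^n*(Q^k*AA Q n k + b*(Q^(2*k+1) - Q^k)*AA Q n (Suc k)) = Q^(2*n)*AA Q n k
     + (1-b)*(1-Q^n)*Q^n*AA Q (n-1) k - b*Q*(1-Q^n)*(1-Q^(n-1))*AA Q (n-2) k"
proof -
  have Q0: "Q \<noteq> 0" using assms by simp
  have h2: "(Q^n - 1)*uu Q (n-1) k = (Q^n - Q^k)*uu Q n k" by (rule uu_L1[OF Q0])
  have h4: "(Q^(n-1) - 1)*uu Q (n-2) k = (Q^(n-1) - Q^k)*uu Q (n-1) k"
    using uu_L1[OF Q0, of m k] assms(3) by simp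
  have hx: "Q^n = Q * Q^(n-1)" using assms(3) by simp
  have hw: "Q^n * uu Q n (Suc k) = (Q^n - Q^k)*uu Q n k"
    using Q0 by (simp add: uu_Suc field_simps)
  have nz: "dd Q k \<noteq> 0" using dd_pos[OF assms(1,2)] by (metis less_irrefl)
  have nz2: "1 - Q*Q^k \<noteq> 0" using pow_ne1[OF assms(1,2), of "Suc k"] by simp
  have "Q^n*(Q^k*AA Q n k + b*(Q*(Q^k)^2 - Q^k)*AA Q n (Suc k)) = (Q^n)^2*AA Q n k
     + (1-b)*(1-Q^n)*Q^n*AA Q (n-1) k - b*Q*(1-Q^n)*(1-Q^(n-1))*AA Q (n-2) k"
    by (rule coefm_abs[OF h2 h4 hx hw nz nz2 AA_eq[OF assms(1,2)] AA_Suc_eq[OF assms(1,2)]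
          AA_eq[OF assms(1,2)] AA_eq[OF assms(1,2)]])
  then show ?thesis by (simp add: power_add power_mult power2_eq_square mult.commute)
qed

lemma PP_Em: assumes "0 < Q" "Q < 1"
  shows "Q^n * PP Q b n (Q*lam) = Q^(2*n) * PP Q b n lam + (1-b)*(1-Q^n)*Q^n*PP Q b (n-1) lam
     - b*Q*(1-Q^n)*(1-Q^(n-1))*PP Q b (n-2) lam"
proof (cases n)
  case 0 then show ?thesis by (simp add: PP_def)
next
  case (Suc m)
  have Q0: "Q \<noteq> 0" using assms by simp
  have p2: "PP Q b (n-1) lam = (\<Sum>k<Suc n. AA Q (n-1) k * ph Q b k lam)"
    by (rule PP_ext[OF Q0]) (simp add: Suc)
  have p3: "PP Q b (n-2) lam = (\<Sum>k<Suc n. AA Q (n-2) k * ph Q b k lam)"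
    by (rule PP_ext[OF Q0]) (simp add: Suc)
  have "Q^n * PP Q b n (Q*lam) = (\<Sum>k<Suc n. Q^n*(Q^k * AA Q n k + b*(Q^(2*k+1) - Q^k)*AA Q n (Suc k)) * ph Q b k lam)"
    unfolding PPQ[OF Q0] sum_distrib_left by (rule sum.cong) (simp_all add: mult.assoc)
  also have "\<dots> = (\<Sum>k<Suc n. (Q^(2*n)*AA Q n k
     + (1-b)*(1-Q^n)*Q^n*AA Q (n-1) k - b*Q*(1-Q^n)*(1-Q^(n-1))*AA Q (n-2) k) * ph Q b k lam)"
    using coefm[OF assms Suc] by simp
  also have "\<dots> = Q^(2*n) * PP Q b n lam + (1-b)*(1-Q^n)*Q^n*PP Q b (n-1) lam
     - b*Q*(1-Q^n)*(1-Q^(n-1))*PP Q b (n-2) lam"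
    unfolding p2 p3 unfolding PP_def sum_distrib_left sum.distrib[symmetric] sum_subtractf[symmetric]
    by (rule sum.cong) (simp_all add: algebra_simps)
  finally show ?thesis .
qed



lemma coefp_abs2:
  fixes Q x z b U c dj a be e f U1 W0 u0m1 u1m1 u0m2 Aj Aj1 A0 A1 A2 :: real
  assumes nz: "a \<noteq> 0" "be \<noteq> 0" "dj \<noteq> 0" "e \<noteq> 0" "f \<noteq> 0" "Q \<noteq> 0" "z \<noteq> 0"
    and hd: "a = Q*x - 1" "be = Q^2*x-1" "e = 1 - Q*z" "f = 1 - Q^2*z"
    and hU1: "U1 = (Q^2*x - Q^2*z)*U/be" and hW0: "W0 = (Q*x-Q^2*z)*U1/a"
    and hu0m1: "u0m1 = Q*x*U1/a" and hu1m1: "u1m1 = Q^2*x*U/be" and hu0m2: "u0m2 = Q*x*u1m1/a"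
    and hAj: "Aj = c*u0m2/dj" and hAj1: "Aj1 = c*(-Q)*u0m1/(dj*e)"
    and hA0: "A0 = c*Q^2*W0/(dj*e*f)" and hA1: "A1 = c*Q^2*U1/(dj*e*f)" and hA2: "A2 = c*Q^2*U/(dj*e*f)"
  shows "-(Aj*(1/z) + Aj1*((1/z)/Q)*(1 + b*(Q^2*z))) = Q*x*(b*A0 + (1-b)*A1 - A2)"
  unfolding hAj hAj1 hA0 hA1 hA2 hu0m2 hu0m1 hW0 hu1m1 hU1 by (rule coefp_abs[OF nz hd])

lemma ph_div_aux: assumes "Q \<noteq> 0" shows "Q^j * ph Q b j (lam/Q) = (\<Prod>i<j. lam - b*Q^(Suc i))"
  by (induct j) (use assms in \<open>simp_all add: ph_Suc field_simps\<close>)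

lemma ph_div: assumes "Q \<noteq> 0" shows "Q^j * ((b - lam) * ph Q b j (lam/Q)) = - ph Q b (Suc j) lam"
proof -
  have "ph Q b (Suc j) lam = (lam - b) * (\<Prod>i<j. lam - b*Q^(Suc i))"
    unfolding ph_def by (simp only: prod.lessThan_Suc_shift) simp
  then show ?thesis using ph_div_aux[OF assms, of j b lam] by (simp add: algebra_simps)
qed

lemma term_div: assumes "Q \<noteq> 0"
  shows "(b - lam) * (1 + lam) * ph Q b j (lam/Q)
     = - ((1/Q)^j * ph Q b (Suc (Suc j)) lam) - (1/Q)^j * (1 + b*Q^(Suc j)) * ph Q b (Suc j) lam"
proof -
  have "(b - lam) * ph Q b j (lam/Q) = - ((1/Q)^j) * ph Q b (Suc j) lam"
    using ph_div[OF assms, of j b lam] assms by (simp add: field_simps power_one_over)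
  then have eq: "(1 + lam) * ((b - lam) * ph Q b j (lam/Q)) = (1 + lam) * (- ((1/Q)^j) * ph Q b (Suc j) lam)"
    by simp
  have "(b - lam) * (1 + lam) * ph Q b j (lam/Q) = (1 + lam) * ((b - lam) * ph Q b j (lam/Q))"
    by (simp only: ac_simps)
  also have "\<dots> = - ((1/Q)^j) * ((1 + lam) * ph Q b (Suc j) lam)"
    unfolding eq by (simp add: algebra_simps)
  also have "(1 + lam) * ph Q b (Suc j) lam = ph Q b (Suc (Suc j)) lam + (1 + b*Q^(Suc j)) * ph Q b (Suc j) lam"
    by (simp only: ph_Suc[of Q b "Suc j"]) (simp add: algebra_simps)
  finally show ?thesis by (simp add: algebra_simps)
qed

lemma sum_shift2: "(\<Sum>j<N. f j * g (Suc (Suc j))) = (\<Sum>k<Suc (Suc N). (if k < 2 then 0 else f (k - 2)) * (g k :: real))"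
  by (simp only: sum.lessThan_Suc_shift) simp

lemma k1_abs: fixes Q x b d :: real assumes "x \<noteq> 0" "Q \<noteq> 0" "d \<noteq> 0" "d = 1 - Q"
  shows "-(1 + b*Q) = Q*x*(b*(-Q*(1-1/x)/d) + (1-b)*(-Q*(1-1/(Q*x))/d) - (-Q*(1-1/(Q^2*x))/d))"
proof -
  have "Q*x*(b*(-Q*(1-1/x)/d) + (1-b)*(-Q*(1-1/(Q*x))/d) - (-Q*(1-1/(Q^2*x))/d))
    = (-(Q^2)*x*b + Q^2*b - Q^2*x*(1-b) + Q*(1-b) + Q^2*x - 1)/d"
    using assms(1-3) by (simp add: field_simps power2_eq_square)
  also have "\<dots> = -(1 + b*Q)" using assms(3,4) by (simp add: field_simps) algebra
  finally show ?thesis by simp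
qed

lemma coefp: assumes "0 < Q" "Q < 1"
  shows "-((if k < 2 then 0 else AA Q n (k-2) * (1/Q)^(k-2))
          + (if k = 0 then 0 else AA Q n (k-1) * (1/Q)^(k-1) * (1 + b*Q^k)))
     = Q^(n+1)*(b*AA Q n k + (1-b)*AA Q (n+1) k - AA Q (n+2) k)"
proof -
  have Q0: "Q \<noteq> 0" using assms by simp
  have qn: "Q^n \<noteq> 0" using Q0 by simp
  have nz1: "1 - Q \<noteq> 0" using assms by simp
  consider "k = 0" | "k = 1" | j where "k = Suc (Suc j)" by (metis One_nat_def not0_implies_Suc)
  then show ?thesis
  proof cases
    case 1 then show ?thesis by (simp add: algebra_simps)
  next
    case 2
    have "AA Q m 1 = -Q*(1-1/Q^m)/(1-Q)" for m by (simp add: AA_def uu_def dd_def)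
    then show ?thesis unfolding 2 using k1_abs[OF qn Q0 nz1 refl, of b]
      by (simp add: power2_eq_square mult.assoc)
  next
    case 3
    define x where "x = Q^n"
    define z where "z = Q^j"
    have xz: "x \<noteq> 0" "z \<noteq> 0" "x > 0" "z > 0" using Q0 assms by (auto simp: x_def z_def)
    have na: "Q*x - 1 \<noteq> 0" using pow_ne1[OF assms, of "Suc n"] by (simp add: x_def)
    have nb: "Q^2*x - 1 \<noteq> 0" using pow_ne1[OF assms, of "Suc (Suc n)"] by (simp add: x_def power2_eq_square mult.assoc)
    have ne: "1 - Q*z \<noteq> 0" using pow_ne1[OF assms, of "Suc j"] by (simp add: z_def)
    have nf: "1 - Q^2*z \<noteq> 0" using pow_ne1[OF assms, of "Suc (Suc j)"] by (simp add: z_def power2_eq_square mult.assoc)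
    have ndj: "dd Q j \<noteq> 0" using dd_pos[OF assms, of j] by simp
    have r1: "(Q^2*x - 1)*uu Q (Suc n) k = (Q^2*x - Q^2*z)*uu Q (Suc (Suc n)) k"
      using uu_L1[OF Q0, of "Suc (Suc n)" k] 3 by (simp add: x_def z_def power2_eq_square mult.assoc)
    have r2: "(Q*x - 1)*uu Q n k = (Q*x - Q^2*z)*uu Q (Suc n) k"
      using uu_L1[OF Q0, of "Suc n" k] 3 by (simp add: x_def z_def power2_eq_square mult.assoc)
    have r3: "Q*x*uu Q (Suc n) k = (Q*x - 1)*uu Q n (Suc j)"
      using uu_L3[OF Q0, of "Suc n" "Suc j"] 3 by (simp add: x_def)
    have r4: "Q^2*x*uu Q (Suc (Suc n)) k = (Q^2*x - 1)*uu Q (Suc n) (Suc j)"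
      using uu_L3[OF Q0, of "Suc (Suc n)" "Suc j"] 3 by (simp add: x_def power2_eq_square mult.assoc)
    have r5: "Q*x*uu Q (Suc n) (Suc j) = (Q*x - 1)*uu Q n j"
      using uu_L3[OF Q0, of "Suc n" j] by (simp add: x_def)
    have hU1: "uu Q (Suc n) k = (Q^2*x - Q^2*z)*uu Q (Suc (Suc n)) k/(Q^2*x - 1)"
      using r1 nb by (simp add: field_simps)
    have hW0: "uu Q n k = (Q*x - Q^2*z)*uu Q (Suc n) k/(Q*x - 1)"
      using r2 na by (simp add: field_simps)
    have hu0m1: "uu Q n (Suc j) = Q*x*uu Q (Suc n) k/(Q*x - 1)"
      using r3 na by (simp add: field_simps)
    have hu1m1: "uu Q (Suc n) (Suc j) = Q^2*x*uu Q (Suc (Suc n)) k/(Q^2*x - 1)"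
      using r4 nb by (simp add: field_simps)
    have hu0m2: "uu Q n j = Q*x*uu Q (Suc n) (Suc j)/(Q*x - 1)"
      using r5 na by (simp add: field_simps)
    have hAj: "AA Q n j = (-Q)^j * uu Q n j / dd Q j" by (simp add: AA_def)
    have hAj1: "AA Q n (Suc j) = (-Q)^j * (-Q) * uu Q n (Suc j) / (dd Q j * (1 - Q*z))"
      using AA_Suc_eq[OF assms, of n j] ndj ne by (simp add: z_def field_simps)
    have hA: "AA Q m k = (-Q)^j * Q^2 * uu Q m k / (dd Q j * (1 - Q*z) * (1 - Q^2*z))" for m
    proof -
      have "dd Q j * (1 - Q*z) * (1 - Q^2*z) \<noteq> 0" using ndj ne nf by simp
      then show ?thesis using AA_SS_eq[OF assms, of m j] 3 unfolding z_def by (simp add: eq_divide_eq)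
    qed
    have res: "-(AA Q n j*(1/z) + AA Q n (Suc j)*((1/z)/Q)*(1 + b*(Q^2*z)))
        = Q*x*(b*AA Q n k + (1-b)*AA Q (Suc n) k - AA Q (Suc (Suc n)) k)"
      by (rule coefp_abs2[OF na nb ndj ne nf Q0 xz(2) refl refl refl refl hU1 hW0 hu0m1 hu1m1 hu0m2
          hAj hAj1 hA hA hA])
    have c1: "(1/Q)^j = 1/z" by (simp add: z_def power_one_over)
    have c2: "(1/Q)^(Suc j) = (1/z)/Q" by (simp add: z_def power_one_over)
    have c3: "Q^k = Q^2*z" using 3 by (simp add: z_def power2_eq_square)
    show ?thesis using res 3 unfolding c3 by (simp add: c1 c2 x_def ac_simps)
  qed
qed



lemma PP_Ep: assumes "0 < Q" "Q < 1"
  shows "(b - lam)*(1+lam)*PP Q b n (lam/Q) = Q^(n+1)*(b*PP Q b n lam + (1-b)*PP Q b (n+1) lam - PP Q b (n+2) lam)"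
proof -
  have Q0: "Q \<noteq> 0" using assms by simp
  define M where "M = Suc n"
  define F where "F k = (if k < 2 then 0 else AA Q n (k-2) * (1/Q)^(k-2))" for k
  define G where "G k = (if k = 0 then 0 else AA Q n (k-1) * (1/Q)^(k-1) * (1 + b*Q^k))" for k
  have "(b - lam)*(1+lam)*PP Q b n (lam/Q) = (\<Sum>j<M. AA Q n j * ((b - lam)*(1+lam)*ph Q b j (lam/Q)))"
    unfolding PP_def M_def sum_distrib_left by (rule sum.cong) (simp_all add: ac_simps)
  also have "\<dots> = - (\<Sum>j<M. (AA Q n j * (1/Q)^j) * ph Q b (Suc (Suc j)) lam)
      - (\<Sum>j<M. (AA Q n j * (1/Q)^j * (1 + b*Q^(Suc j))) * ph Q b (Suc j) lam)"
    unfolding term_div[OF Q0] sum_negf[symmetric] sum_subtractf[symmetric]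
    by (rule sum.cong) (simp_all add: algebra_simps)
  also have "(\<Sum>j<M. (AA Q n j * (1/Q)^j) * ph Q b (Suc (Suc j)) lam) = (\<Sum>k<Suc (Suc M). F k * ph Q b k lam)"
    unfolding F_def by (rule sum_shift2[of "\<lambda>j. AA Q n j * (1/Q)^j" "\<lambda>k. ph Q b k lam" M])
  also have "(\<Sum>j<M. (AA Q n j * (1/Q)^j * (1 + b*Q^(Suc j))) * ph Q b (Suc j) lam) = (\<Sum>k<Suc M. G k * ph Q b k lam)"
    unfolding sum_shift1[of "\<lambda>j. AA Q n j * (1/Q)^j * (1 + b*Q^(Suc j))" "\<lambda>k. ph Q b k lam" M] G_def
    by (rule sum.cong) auto
  also have "(\<Sum>k<Suc M. G k * ph Q b k lam) = (\<Sum>k<Suc (Suc M). G k * ph Q b k lam)"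
    using AA_vanish[OF Q0, of n M] by (simp add: G_def M_def)
  finally have L0: "(b - lam)*(1+lam)*PP Q b n (lam/Q) = - (\<Sum>k<Suc (Suc M). F k * ph Q b k lam) - (\<Sum>k<Suc (Suc M). G k * ph Q b k lam)" .
  have L: "(b - lam)*(1+lam)*PP Q b n (lam/Q) = (\<Sum>k<Suc (Suc M). (- F k - G k) * ph Q b k lam)"
    unfolding L0 by (simp add: sum_subtractf sum_negf left_diff_distrib del: sum.lessThan_Suc)
  have p1: "PP Q b n lam = (\<Sum>k<Suc (Suc M). AA Q n k * ph Q b k lam)"
    by (rule PP_ext[OF Q0]) (simp add: M_def)
  have p2: "PP Q b (n+1) lam = (\<Sum>k<Suc (Suc M). AA Q (n+1) k * ph Q b k lam)"
    by (rule PP_ext[OF Q0]) (simp add: M_def)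
  have p3: "PP Q b (n+2) lam = (\<Sum>k<Suc (Suc M). AA Q (n+2) k * ph Q b k lam)"
    by (rule PP_ext[OF Q0]) (simp add: M_def)
  have "Q^(n+1)*(b*PP Q b n lam + (1-b)*PP Q b (n+1) lam - PP Q b (n+2) lam)
     = (\<Sum>k<Suc (Suc M). (Q^(n+1)*(b*AA Q n k + (1-b)*AA Q (n+1) k - AA Q (n+2) k)) * ph Q b k lam)"
    unfolding p1 p2 p3 sum_distrib_left sum.distrib[symmetric] sum_subtractf[symmetric]
    by (rule sum.cong) (simp_all add: algebra_simps)
  also have "\<dots> = (\<Sum>k<Suc (Suc M). (- F k - G k) * ph Q b k lam)"
    using coefp[OF assms, of k n b for k] unfolding F_def G_def by (intro sum.cong) (simp_all add: algebra_simps)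
  finally show ?thesis using L by simp
qed



definition cc :: "real \<Rightarrow> real \<Rightarrow> nat \<Rightarrow> real" where
  "cc q \<tau> n = q powr (- real n * \<tau>) * q powr (real n * (real n - 1) / 2) / sqrt (dd (q^2) n)"
definition pr :: "real \<Rightarrow> real \<Rightarrow> nat \<Rightarrow> real \<Rightarrow> real" where
  "pr q \<tau> n lam = cc q \<tau> n * PP (q^2) (q powr (2*\<tau>)) n lam"
definition aa :: "real \<Rightarrow> nat \<Rightarrow> real" where
  "aa q k = sqrt (1 - q^(2*k))"

lemma aa_0[simp]: "aa q 0 = 0" by (simp add: aa_def)

lemma aa_sq: assumes "0 < q" "q < 1" shows "(aa q k)^2 = 1 - q^(2*k)"
proof -
  have "q^(2*k) \<le> 1" using assms by (simp add: power_le_one)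
  then show ?thesis by (simp add: aa_def)
qed

lemma Kc: assumes "0 < q" "q < 1"
  shows "aa q (Suc n) * cc q \<tau> (Suc n) = cc q \<tau> n * q^n / q powr \<tau>"
proof -
  have Q: "0 < q^2" "q^2 < 1" using assms by (auto simp: power_less_one_iff)
  have pos: "0 < 1 - q^(2*Suc n)" using power_less_one_iff[of q "2*Suc n"] assms by simp
  have ddS: "dd (q^2) (Suc n) = dd (q^2) n * (1 - q^(2*Suc n))"
    by (simp only: dd_Suc power_mult)
  have dpos: "dd (q^2) n > 0" by (rule dd_pos[OF Q])
  have s: "aa q (Suc n) / sqrt (dd (q^2) (Suc n)) = 1 / sqrt (dd (q^2) n)"
    unfolding ddS aa_def using pos dpos by (simp add: real_sqrt_mult)
  have e1: "q powr (- real (Suc n) * \<tau>) = q powr (- real n * \<tau>) / q powr \<tau>"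
  proof -
    have "- real (Suc n) * \<tau> = - real n * \<tau> - \<tau>" by (simp add: algebra_simps)
    then show ?thesis by (simp add: powr_diff)
  qed
  have e2: "q powr (real (Suc n) * (real (Suc n) - 1) / 2) = q powr (real n * (real n - 1) / 2) * q^n"
  proof -
    have "real (Suc n) * (real (Suc n) - 1) / 2 = real n * (real n - 1) / 2 + real n"
      by (simp add: field_simps) 
    then have "q powr (real (Suc n) * (real (Suc n) - 1) / 2) = q powr (real n * (real n - 1) / 2 + real n)"
      by (simp only:)
    also have "\<dots> = q powr (real n * (real n - 1) / 2) * q powr (real n)" by (rule powr_add)
    finally show ?thesis using assms by (simp add: powr_realpow)
  qed
  have "aa q (Suc n) * cc q \<tau> (Suc n) = q powr (- real (Suc n) * \<tau>) * q powr (real (Suc n) * (real (Suc n) - 1) / 2) * (aa q (Suc n) / sqrt (dd (q^2) (Suc n)))"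
    unfolding cc_def by simp
  also have "\<dots> = cc q \<tau> n * q^n / q powr \<tau>"
    unfolding s e1 e2 cc_def by (simp add: ac_simps)
  finally show ?thesis .
qed

lemma Ka: assumes "0 < q" "q < 1"
  shows "aa q n * q^(n-1) * cc q \<tau> (n-1) = cc q \<tau> n * (1 - q^(2*n)) * q powr \<tau>"
proof (cases n)
  case 0 then show ?thesis by simp
next
  case (Suc m)
  have t: "q powr \<tau> > 0" using assms by simp
  have "aa q n * q^(n-1) * cc q \<tau> (n-1) = aa q (Suc m) * (cc q \<tau> m * q^m / q powr \<tau>) * q powr \<tau>"
    using t Suc by simp
  also have "\<dots> = aa q (Suc m) * (aa q (Suc m) * cc q \<tau> (Suc m)) * q powr \<tau>"
    unfolding Kc[OF assms] ..
  also have "\<dots> = (aa q (Suc m))^2 * cc q \<tau> (Suc m) * q powr \<tau>" by (simp add: power2_eq_square)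
  finally show ?thesis unfolding aa_sq[OF assms] Suc by simp
qed

lemma Kd: assumes "0 < q" "q < 1"
  shows "q^(2*n) * aa q n * aa q (n-1) * cc q \<tau> (n-2)
     = q^3 * cc q \<tau> n * (q powr \<tau>)^2 * (1 - q^(2*n)) * (1 - q^(2*(n-1)))"
proof -
  consider "n = 0" | "n = 1" | m where "n = Suc (Suc m)" by (metis One_nat_def not0_implies_Suc)
  then show ?thesis
  proof cases
    case 3
    have k1: "aa q (Suc m) * q^m * cc q \<tau> m = cc q \<tau> (Suc m) * (1 - q^(2*Suc m)) * q powr \<tau>"
      using Ka[OF assms, of "Suc m" \<tau>] by simp
    have k2: "aa q (Suc (Suc m)) * q^(Suc m) * cc q \<tau> (Suc m) = cc q \<tau> (Suc (Suc m)) * (1 - q^(2*Suc (Suc m))) * q powr \<tau>"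
      using Ka[OF assms, of "Suc (Suc m)" \<tau>] by simp
    have "q^(2*n) * aa q n * aa q (n-1) * cc q \<tau> (n-2)
        = q^3 * (aa q (Suc (Suc m)) * q^(Suc m) * (aa q (Suc m) * q^m * cc q \<tau> m))"
    proof -
      have "2 * Suc (Suc m) = 3 + Suc m + m" by simp
      then have pw: "q^(2 * Suc (Suc m)) = q^3 * q^(Suc m) * q^m" by (simp only: power_add)
      show ?thesis unfolding 3 pw by (simp add: ac_simps)
    qed
    also have "\<dots> = q^3 * ((aa q (Suc (Suc m)) * q^(Suc m) * cc q \<tau> (Suc m)) * (1 - q^(2*Suc m)) * q powr \<tau>)"
      unfolding k1 by (simp only: ac_simps)
    also have "\<dots> = q^3 * (cc q \<tau> (Suc (Suc m)) * (1 - q^(2*Suc (Suc m))) * q powr \<tau> * (1 - q^(2*Suc m)) * q powr \<tau>)"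
      unfolding k2 ..
    also have "\<dots> = q^3 * cc q \<tau> n * (q powr \<tau>)^2 * (1 - q^(2*n)) * (1 - q^(2*(n-1)))"
      using 3 by (simp add: power2_eq_square ac_simps)
    finally show ?thesis .
  qed simp_all
qed



lemma core0r: fixes x t q c lam Pn1 Pm P0 :: real
  assumes "t \<noteq> 0" "x*Pn1 + t^2*(1-x)*Pm - (1-t^2)*x*P0 = lam*P0"
  shows "q*(c*(1-x)*t*Pm) + q*(c*x/t*Pn1) - q*(1/t - t)*(x*(c*P0)) = lam*(q/t)*(c*P0)"
proof -
  have "q*(c*(1-x)*t*Pm) + q*(c*x/t*Pn1) - q*(1/t - t)*(x*(c*P0)) = (q*c/t)*(x*Pn1 + t^2*(1-x)*Pm - (1-t^2)*x*P0)"
    using assms(1) by (simp add: field_simps power2_eq_square)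
  then show ?thesis using assms(2) by simp
qed

lemma corem: fixes x x' t q c K PQ P0 P1 P2 :: real
  assumes "t \<noteq> 0" "x \<noteq> 0" "x*K = q^3*c*t^2*(1-x)*(1-x')"
    "x*PQ = x^2*P0 + (1-t^2)*(1-x)*x*P1 - t^2*q^2*(1-x)*(1-x')*P2"
  shows "-(K*P2) + q*(x*(c*P0)) + q*(1/t - t)*(c*(1-x)*t*P1) = q*(c*PQ)"
proof -
  have "x*(-(K*P2) + q*(x*(c*P0)) + q*(1/t - t)*(c*(1-x)*t*P1)) = x*(q*(c*PQ))"
    using assms by (simp add: field_simps power2_eq_square) algebra
  then show ?thesis using assms(2) by simp
qed

lemma corep: fixes x t q c lam PD P0 P1 P2 :: real
  assumes "t \<noteq> 0" "q \<noteq> 0"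
    "(t^2 - lam)*(1+lam)*PD = q^2*x*(t^2*P0 + (1-t^2)*P1 - P2)"
  shows "-((c*x*q/t^2)*P2) + q*(x*(c*P0)) + q*(1/t - t)*(c*x/t*P1) = (1/q)*((1 - (1/t^2)*lam)*(1+lam))*(c*PD)"
proof -
  have "(1/q)*((1 - (1/t^2)*lam)*(1+lam))*(c*PD) = (c/(q*t^2))*((t^2 - lam)*(1+lam)*PD)"
    using assms(1,2) by (simp add: field_simps)
  also have "\<dots> = (c/(q*t^2))*(q^2*x*(t^2*P0 + (1-t^2)*P1 - P2))" using assms(3) by simp
  also have "\<dots> = -((c*x*q/t^2)*P2) + q*(x*(c*P0)) + q*(1/t - t)*(c*x/t*P1)"
    using assms(1,2) by (simp add: field_simps power2_eq_square)
  finally show ?thesis by simp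
qed

lemma powr_facts: fixes q \<tau> :: real assumes "0 < q"
  shows "q powr (2*\<tau>) = (q powr \<tau>)^2" "q powr (-\<tau>) = 1 / q powr \<tau>"
    "q powr (1 - \<tau>) = q / q powr \<tau>" "q powr (-2*\<tau>) = 1/(q powr \<tau>)^2"
proof -
  show a: "q powr (2*\<tau>) = (q powr \<tau>)^2"
  proof -
    have "q powr (2*\<tau>) = q powr (\<tau> + \<tau>)" by (simp only: mult_2)
    also have "\<dots> = q powr \<tau> * q powr \<tau>" by (rule powr_add)
    finally show ?thesis by (simp add: power2_eq_square)
  qed
  show "q powr (-\<tau>) = 1 / q powr \<tau>" by (rule powr_minus_divide)
  have "q powr (1 - \<tau>) = q powr 1 / q powr \<tau>" by (rule powr_diff)
  then show "q powr (1 - \<tau>) = q / q powr \<tau>" using assms by (simp only: powr_one less_imp_le)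
  have "q powr (-2*\<tau>) = q powr (-(2*\<tau>))" by simp
  also have "\<dots> = 1/(q powr (2*\<tau>))" by (rule powr_minus_divide)
  finally show "q powr (-2*\<tau>) = 1/(q powr \<tau>)^2" unfolding a .
qed

lemma I0r: assumes "0 < q" "q < 1"
  shows "q*(aa q n * q^(n-1) * pr q \<tau> (n-1) lam) + q*(q^n * aa q (n+1) * pr q \<tau> (n+1) lam)
     - q*(q powr (-\<tau>) - q powr \<tau>)*(q^n*q^n*pr q \<tau> n lam) = lam * q powr (1-\<tau>) * pr q \<tau> n lam"
proof -
  define t where "t = q powr \<tau>"
  define x where "x = (q^2)^n"
  define c where "c = cc q \<tau> n"
  have t0: "t \<noteq> 0" using assms by (simp add: t_def)
  have Q: "0 < q^2" "q^2 < 1" using assms by (auto simp: power_less_one_iff)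
  have qq: "(q^2)^n = (q^n)^2" by (metis power_even_eq power_mult)
  have qx: "q^(2*n) = x" unfolding x_def by (simp add: power_mult)
  have b2: "q powr (2*\<tau>) = t^2" unfolding t_def by (rule powr_facts(1)[OF assms(1)])
  have X1: "aa q n * q^(n-1) * pr q \<tau> (n-1) lam = c*(1-x)*t*PP (q^2) (t^2) (n-1) lam"
  proof -
    have "aa q n * q^(n-1) * pr q \<tau> (n-1) lam = (aa q n * q^(n-1) * cc q \<tau> (n-1)) * PP (q^2) (t^2) (n-1) lam"
      by (simp add: pr_def b2 mult.assoc)
    also have "\<dots> = c*(1-x)*t*PP (q^2) (t^2) (n-1) lam"
      unfolding Ka[OF assms] qx c_def t_def ..
    finally show ?thesis .
  qed
  have Y1: "q^n * aa q (n+1) * pr q \<tau> (n+1) lam = c*x/t*PP (q^2) (t^2) (n+1) lam"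
  proof -
    have "q^n * aa q (n+1) * pr q \<tau> (n+1) lam = q^n * (aa q (Suc n) * cc q \<tau> (Suc n)) * PP (q^2) (t^2) (n+1) lam"
      by (simp add: pr_def b2 mult.assoc)
    also have "\<dots> = (q^n * q^n) * c / t * PP (q^2) (t^2) (n+1) lam"
      unfolding Kc[OF assms] c_def t_def by simp
    also have "q^n * q^n = x" unfolding x_def by (simp add: power_mult_distrib power2_eq_square)
    finally show ?thesis by simp
  qed
  have X0: "q^n*q^n*pr q \<tau> n lam = x*(c*PP (q^2) (t^2) n lam)"
  proof -
    have "q^n * q^n = x" unfolding x_def by (simp add: power_mult_distrib power2_eq_square)
    then show ?thesis by (simp add: pr_def c_def b2)
  qed
  have E0: "x * PP (q^2) (t^2) (Suc n) lam + t^2*(1-x)*PP (q^2) (t^2) (n-1) lam - (1-t^2)*x*PP (q^2) (t^2) n lam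
       = lam * PP (q^2) (t^2) n lam"
    unfolding x_def by (rule PP_E0[OF Q])
  show ?thesis
    unfolding X1 Y1 X0 powr_facts(2,3)[OF assms(1)] t_def[symmetric]
    using core0r[OF t0 E0, of q c] by (simp add: pr_def c_def b2)
qed

lemma Imr: assumes "0 < q" "q < 1"
  shows "-(aa q n * aa q (n-1) * pr q \<tau> (n-2) lam) + q*(q^n*q^n*pr q \<tau> n lam)
     + q*(q powr (-\<tau>) - q powr \<tau>)*(aa q n * q^(n-1) * pr q \<tau> (n-1) lam) = q * pr q \<tau> n (lam*q^2)"
proof -
  define t where "t = q powr \<tau>"
  define x where "x = (q^2)^n"
  define x' where "x' = (q^2)^(n-1)"
  define c where "c = cc q \<tau> n"
  define K where "K = aa q n * aa q (n-1) * cc q \<tau> (n-2)"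
  have t0: "t \<noteq> 0" using assms by (simp add: t_def)
  have x0: "x \<noteq> 0" using assms by (simp add: x_def)
  have Q: "0 < q^2" "q^2 < 1" using assms by (auto simp: power_less_one_iff)
  have qx: "q^(2*n) = x" unfolding x_def by (simp add: power_mult)
  have qx': "q^(2*(n-1)) = x'" unfolding x'_def by (simp add: power_mult)
  have b2: "q powr (2*\<tau>) = t^2" unfolding t_def by (rule powr_facts(1)[OF assms(1)])
  have X1: "aa q n * q^(n-1) * pr q \<tau> (n-1) lam = c*(1-x)*t*PP (q^2) (t^2) (n-1) lam"
  proof -
    have "aa q n * q^(n-1) * pr q \<tau> (n-1) lam = (aa q n * q^(n-1) * cc q \<tau> (n-1)) * PP (q^2) (t^2) (n-1) lam"
      by (simp add: pr_def b2 mult.assoc)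
    also have "\<dots> = c*(1-x)*t*PP (q^2) (t^2) (n-1) lam"
      unfolding Ka[OF assms] qx c_def t_def ..
    finally show ?thesis .
  qed
  have X0: "q^n*q^n*pr q \<tau> n lam = x*(c*PP (q^2) (t^2) n lam)"
  proof -
    have "q^n * q^n = x" unfolding x_def by (simp add: power_mult_distrib power2_eq_square)
    then show ?thesis by (simp add: pr_def c_def b2)
  qed
  have X2: "aa q n * aa q (n-1) * pr q \<tau> (n-2) lam = K * PP (q^2) (t^2) (n-2) lam"
    by (simp add: pr_def K_def b2 mult.assoc)
  have XQ: "pr q \<tau> n (lam*q^2) = c * PP (q^2) (t^2) n (q^2*lam)"
    unfolding pr_def b2 c_def by (simp add: mult.commute)
  have hK: "x*K = q^3*c*t^2*(1-x)*(1-x')"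
  proof -
    have "x*K = q^(2*n) * aa q n * aa q (n-1) * cc q \<tau> (n-2)" by (simp add: K_def qx mult.assoc)
    also have "\<dots> = q^3*cc q \<tau> n*t^2*(1-q^(2*n))*(1-q^(2*(n-1)))" unfolding t_def by (rule Kd[OF assms])
    also have "\<dots> = q^3*c*t^2*(1-x)*(1-x')" unfolding qx qx' c_def ..
    finally show ?thesis .
  qed
  have hE: "x * PP (q^2) (t^2) n (q^2*lam) = x^2 * PP (q^2) (t^2) n lam + (1-t^2)*(1-x)*x*PP (q^2) (t^2) (n-1) lam
     - t^2*q^2*(1-x)*(1-x')*PP (q^2) (t^2) (n-2) lam"
  proof -
    have "(q^2)^(2*n) = x^2" unfolding x_def by (simp add: power_mult[symmetric] mult.commute)
    then show ?thesis using PP_Em[OF Q, of n "t^2" lam] unfolding x_def[symmetric] x'_def[symmetric]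
      by (simp add: algebra_simps)
  qed
  show ?thesis unfolding X1 X0 X2 XQ powr_facts(2)[OF assms(1)] t_def[symmetric]
    by (rule corem[OF t0 x0 hK hE])
qed

lemma Ipr: assumes "0 < q" "q < 1"
  shows "-(aa q (n+1) * aa q (n+2) * pr q \<tau> (n+2) lam) + q*(q^n*q^n*pr q \<tau> n lam)
     + q*(q powr (-\<tau>) - q powr \<tau>)*(q^n * aa q (n+1) * pr q \<tau> (n+1) lam)
     = (1/q) * ((1 - q powr (-2*\<tau>)*lam)*(1+lam)) * pr q \<tau> n (lam/q^2)"
proof -
  define t where "t = q powr \<tau>"
  define x where "x = (q^2)^n"
  define c where "c = cc q \<tau> n"
  have t0: "t \<noteq> 0" using assms by (simp add: t_def)
  have q0: "q \<noteq> 0" using assms by simp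
  have Q: "0 < q^2" "q^2 < 1" using assms by (auto simp: power_less_one_iff)
  have b2: "q powr (2*\<tau>) = t^2" unfolding t_def by (rule powr_facts(1)[OF assms(1)])
  have qqx: "q^n * q^n = x" unfolding x_def by (simp add: power_mult_distrib power2_eq_square)
  have Y1: "q^n * aa q (n+1) * pr q \<tau> (n+1) lam = c*x/t*PP (q^2) (t^2) (n+1) lam"
  proof -
    have "q^n * aa q (n+1) * pr q \<tau> (n+1) lam = q^n * (aa q (Suc n) * cc q \<tau> (Suc n)) * PP (q^2) (t^2) (n+1) lam"
      by (simp add: pr_def b2 mult.assoc)
    also have "\<dots> = (q^n * q^n) * c / t * PP (q^2) (t^2) (n+1) lam"
      unfolding Kc[OF assms] c_def t_def by simp
    finally show ?thesis unfolding qqx by simp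
  qed
  have X0: "q^n*q^n*pr q \<tau> n lam = x*(c*PP (q^2) (t^2) n lam)"
    using qqx by (simp add: pr_def c_def b2)
  have X2: "aa q (n+1) * aa q (n+2) * pr q \<tau> (n+2) lam = (c*x*q/t^2) * PP (q^2) (t^2) (n+2) lam"
  proof -
    have "aa q (n+1) * aa q (n+2) * pr q \<tau> (n+2) lam
        = (aa q (Suc n) * (aa q (Suc (Suc n)) * cc q \<tau> (Suc (Suc n)))) * PP (q^2) (t^2) (n+2) lam"
      by (simp add: pr_def b2 mult.assoc)
    also have "\<dots> = (aa q (Suc n) * cc q \<tau> (Suc n)) * q^(Suc n) / t * PP (q^2) (t^2) (n+2) lam"
      unfolding Kc[OF assms, of "Suc n"] t_def by simp
    also have "\<dots> = (c * q^n / t) * q^(Suc n) / t * PP (q^2) (t^2) (n+2) lam"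
      unfolding Kc[OF assms, of n] t_def c_def ..
    also have "\<dots> = (c*x*q/t^2) * PP (q^2) (t^2) (n+2) lam"
      using qqx[symmetric] by (simp add: power2_eq_square)
    finally show ?thesis .
  qed
  have XD: "pr q \<tau> n (lam/q^2) = c * PP (q^2) (t^2) n (lam/q^2)"
    by (simp add: pr_def c_def b2)
  have hE: "(t^2 - lam)*(1+lam)*PP (q^2) (t^2) n (lam/q^2) = q^2*x*(t^2*PP (q^2) (t^2) n lam + (1-t^2)*PP (q^2) (t^2) (n+1) lam - PP (q^2) (t^2) (n+2) lam)"
    using PP_Ep[OF Q, of "t^2" lam n] unfolding x_def by (simp add: mult.assoc)
  show ?thesis unfolding Y1 X0 X2 XD powr_facts(2,4)[OF assms(1)] t_def[symmetric]
    by (rule corep[OF t0 q0 hE])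
qed



lemma qpoch_of_real: "qpoch (of_real a) (of_real p) k = of_real (\<Prod>i<k. 1 - a * p^i)"
  by (simp add: qpoch_def)

lemma qpoch_zero: "qpoch 0 p k = 1" by (simp add: qpoch_def)

lemma v_aux: assumes "lam \<noteq> 0"
  shows "(\<Prod>i<j. 1 - (b/lam) * Q^i) * (-Q*lam)^j = (-Q)^j * ph Q b j lam"
proof -
  have "(\<Prod>i<j. 1 - (b/lam) * Q^i) * lam^j = (\<Prod>i<j. (1 - (b/lam) * Q^i) * lam)"
    by (simp add: prod.distrib)
  also have "\<dots> = ph Q b j lam" unfolding ph_def using assms by (intro prod.cong) (auto simp: field_simps)
  finally have eq: "(\<Prod>i<j. 1 - (b/lam) * Q^i) * lam^j = ph Q b j lam" .
  have p: "(-Q*lam)^j = (-Q)^j * lam^j" by (rule power_mult_distrib)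
  have "(\<Prod>i<j. 1 - (b/lam) * Q^i) * ((-Q)^j * lam^j) = (-Q)^j * ((\<Prod>i<j. 1 - (b/lam) * Q^i) * lam^j)"
    by (simp only: ac_simps)
  then show ?thesis unfolding p eq .
qed

lemma pn_eq: assumes "0 < q" "q < 1" "lam \<noteq> 0"
  shows "pn q \<tau> n lam = of_real (pr q \<tau> n lam)"
proof -
  define Q where "Q = q^2"
  define b where "b = q powr (2*\<tau>)"
  have Q: "0 < Q" "Q < 1" using assms by (auto simp: Q_def power_less_one_iff)
  have Q0: "Q \<noteq> 0" using Q by simp
  have pw: "q powr (- 2 * real n) = 1 / Q^n"
  proof -
    have "q powr (- 2 * real n) = q powr (- real (2*n))" by simp
    also have "\<dots> = 1 / q powr (real (2*n))" by (rule powr_minus_divide)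
    also have "q powr (real (2*n)) = q^(2*n)" by (rule powr_realpow[OF assms(1)])
    also have "q^(2*n) = Q^n" by (simp add: Q_def power_mult)
    finally show ?thesis .
  qed
  have dd_eq: "(\<Prod>i<k. 1 - Q * Q^i) = dd Q k" for k by (simp add: dd_def)
  have trm: "qpoch (of_real (q powr (- 2 * real n))) (of_real (q^2)) j * qpoch (of_real (q powr (2*\<tau>) / lam)) (of_real (q^2)) j
      / (qpoch (of_real (q^2)) (of_real (q^2)) j * qpoch 0 (of_real (q^2)) j) * (of_real (- (q^2) * lam))^j
      = of_real (AA Q n j * ph Q b j lam)" for j
  proof -
    have u: "(\<Prod>i<j. 1 - q powr (- 2 * real n) * Q^i) = uu Q n j"
      unfolding uu_def pw by simp
    have "qpoch (of_real (q powr (- 2 * real n))) (of_real (q^2)) j * qpoch (of_real (q powr (2*\<tau>) / lam)) (of_real (q^2)) j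
      / (qpoch (of_real (q^2)) (of_real (q^2)) j * qpoch 0 (of_real (q^2)) j) * (of_real (- (q^2) * lam))^j
      = of_real (uu Q n j * ((\<Prod>i<j. 1 - (b/lam) * Q^i) * (-Q*lam)^j) / dd Q j)"
      unfolding qpoch_of_real qpoch_zero Q_def[symmetric] b_def[symmetric] u dd_eq
      by (simp add: ac_simps)
    also have "\<dots> = of_real (AA Q n j * ph Q b j lam)"
      unfolding v_aux[OF assms(3)] AA_def by (simp add: ac_simps)
    finally show ?thesis .
  qed
  have phi: "phi21 (of_real (q powr (- 2 * real n))) (of_real (q powr (2 * \<tau>) / lam)) 0 (of_real (q^2)) (of_real (- (q^2) * lam))
      = of_real (PP Q b n lam)"
  proof -
    have "phi21 (of_real (q powr (- 2 * real n))) (of_real (q powr (2 * \<tau>) / lam)) 0 (of_real (q^2)) (of_real (- (q^2) * lam))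
        = (\<Sum>j. of_real (AA Q n j * ph Q b j lam))"
      unfolding phi21_def trm ..
    also have "\<dots> = (\<Sum>j<Suc n. of_real (AA Q n j * ph Q b j lam))"
      by (rule suminf_finite) (auto simp: AA_vanish[OF Q0])
    also have "\<dots> = of_real (PP Q b n lam)" by (simp add: PP_def)
    finally show ?thesis .
  qed
  have dpos: "0 \<le> dd Q n" using dd_pos[OF Q, of n] by simp
  have qd: "qpoch (of_real (q^2)) (of_real (q^2)) n = of_real (dd Q n)"
    unfolding qpoch_of_real Q_def[symmetric] dd_eq ..
  show ?thesis
    unfolding pn_def unfolding phi qd unfolding csqrt_of_real[OF dpos]
    unfolding pr_def cc_def Q_def[symmetric] b_def[symmetric]
    by simp
qed



definition EE :: "real \<Rightarrow> complex" where "EE \<phi> = exp (\<i> * complex_of_real \<phi>)"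

lemma EE_nz: "EE \<phi> \<noteq> 0" by (simp add: EE_def)

lemma exp_minus_EE: "exp (- \<i> * complex_of_real \<phi>) = inverse (EE \<phi>)"
  unfolding EE_def by (simp add: exp_minus[symmetric])

lemma vv: assumes "0 < q" "q < 1" "lam \<noteq> 0"
  shows "vvec q \<tau> \<phi> lam k = \<i>^k * EE \<phi>^k * of_real (pr q \<tau> k lam)"
proof -
  have "\<i> * of_nat k * complex_of_real \<phi> = of_nat k * (\<i> * complex_of_real \<phi>)" by simp
  then have "exp (\<i> * of_nat k * complex_of_real \<phi>) = EE \<phi> ^ k"
    unfolding EE_def by (simp only: exp_of_nat_mult)
  then show ?thesis unfolding vvec_def pn_eq[OF assms] by simp
qed

lemma opAadj_alt: "opAadj q x n = complex_of_real (aa q n) * x (n - 1)"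
  by (simp add: opAadj_def aa_def)

lemma opA_alt: "opA q x n = complex_of_real (aa q (n+1)) * x (n + 1)"
  by (simp add: opA_def aa_def)

context
  fixes q \<tau> \<phi> lam :: real
  assumes q: "0 < q" "q < 1" and l: "lam \<noteq> 0"
begin

abbreviation "xx \<equiv> vvec q \<tau> \<phi> lam"
abbreviation "Zn n \<equiv> \<i>^n * EE \<phi>^n"

lemma c_AA: "opA q (opA q xx) n = Zn n * (-(EE \<phi>^2)) * of_real (aa q (n+1) * aa q (n+2) * pr q \<tau> (n+2) lam)"
  unfolding opA_alt vv[OF q l] by (simp add: algebra_simps power2_eq_square)

lemma c_AdAd: "opAadj q (opAadj q xx) n = Zn n * (-(inverse (EE \<phi>)^2)) * of_real (aa q n * aa q (n-1) * pr q \<tau> (n-2) lam)"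
proof -
  consider "n = 0" | "n = 1" | m where "n = Suc (Suc m)" by (metis One_nat_def not0_implies_Suc)
  then show ?thesis
  proof cases
    case 3
    have "EE \<phi> \<noteq> 0" by (rule EE_nz)
    then show ?thesis unfolding opAadj_alt vv[OF q l] 3 by (simp add: field_simps power2_eq_square)
  qed (simp_all add: opAadj_alt)
qed

lemma c_CC: "opC q \<phi> (opC q \<phi> xx) n = Zn n * EE \<phi>^2 * of_real (q^n*q^n*pr q \<tau> n lam)"
  unfolding opC_def vv[OF q l] EE_def[symmetric] by (simp add: algebra_simps power2_eq_square)

lemma c_CdCd: "opCadj q \<phi> (opCadj q \<phi> xx) n = Zn n * inverse (EE \<phi>)^2 * of_real (q^n*q^n*pr q \<tau> n lam)"
  unfolding opCadj_def vv[OF q l] exp_minus_EE by (simp add: algebra_simps power2_eq_square)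

lemma c_CdC: "opCadj q \<phi> (opC q \<phi> xx) n = Zn n * of_real (q^n*q^n*pr q \<tau> n lam)"
  unfolding opCadj_def opC_def vv[OF q l] exp_minus_EE EE_def[symmetric] using EE_nz[of \<phi>]
  by (simp add: field_simps)

lemma c_AdC: "opAadj q (opC q \<phi> xx) n = Zn n * (-\<i>) * of_real (aa q n * q^(n-1) * pr q \<tau> (n-1) lam)"
proof (cases n)
  case (Suc m)
  show ?thesis unfolding opAadj_alt opC_def vv[OF q l] EE_def[symmetric] Suc by (simp add: algebra_simps)
qed (simp add: opAadj_alt)

lemma c_AdCd: "opAadj q (opCadj q \<phi> xx) n = Zn n * (-\<i>) * inverse (EE \<phi>)^2 * of_real (aa q n * q^(n-1) * pr q \<tau> (n-1) lam)"
proof (cases n)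
  case (Suc m)
  have "EE \<phi> \<noteq> 0" by (rule EE_nz)
  then show ?thesis unfolding opAadj_alt opCadj_def vv[OF q l] exp_minus_EE Suc by (simp add: field_simps power2_eq_square)
qed (simp add: opAadj_alt)

lemma c_CdA: "opCadj q \<phi> (opA q xx) n = Zn n * \<i> * of_real (q^n * aa q (n+1) * pr q \<tau> (n+1) lam)"
  unfolding opCadj_def opA_alt vv[OF q l] exp_minus_EE using EE_nz[of \<phi>] by (simp add: field_simps)

lemma c_CA: "opC q \<phi> (opA q xx) n = Zn n * \<i> * EE \<phi>^2 * of_real (q^n * aa q (n+1) * pr q \<tau> (n+1) lam)"
  unfolding opC_def opA_alt vv[OF q l] EE_def[symmetric] by (simp add: algebra_simps power2_eq_square)

end



theorem proposition6p2:
  fixes q \<tau> \<sigma> \<phi> lam :: real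
  assumes "0 < q" "q < 1"
    and "0 \<le> \<phi>" "\<phi> < 2 * pi"
    and "(\<exists>k::nat. lam = - (q ^ (2 * k))) \<or> (\<exists>k::nat. lam = q powr (2 * \<tau> + 2 * real k))"
  shows "(\<lambda>n. 2 * opR q \<tau> \<sigma> \<phi> (vvec q \<tau> \<phi> lam) n) =
    (\<lambda>n. complex_of_real q * exp (- 2 * \<i> * complex_of_real \<phi>) * vvec q \<tau> \<phi> (lam * q^2) n
       + complex_of_real (1 / q) * exp (2 * \<i> * complex_of_real \<phi>)
           * complex_of_real ((1 - q powr (- 2 * \<tau>) * lam) * (1 + lam)) * vvec q \<tau> \<phi> (lam / q^2) n
       + complex_of_real (lam * q powr (1 - \<tau>) * (q powr (- \<sigma>) - q powr \<sigma>)) * vvec q \<tau> \<phi> lam n)"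
proof
  fix n
  have q: "0 < q" "q < 1" using assms(1,2) .
  have l: "lam \<noteq> 0" using assms(5) q(1) by auto
  have l1: "lam * q^2 \<noteq> 0" "lam / q^2 \<noteq> 0" using l q(1) by auto
  define Ap where "Ap = -(aa q (n+1) * aa q (n+2) * pr q \<tau> (n+2) lam) + q*(q^n*q^n*pr q \<tau> n lam)
     + q*(q powr (-\<tau>) - q powr \<tau>)*(q^n * aa q (n+1) * pr q \<tau> (n+1) lam)"
  define Am where "Am = -(aa q n * aa q (n-1) * pr q \<tau> (n-2) lam) + q*(q^n*q^n*pr q \<tau> n lam)
     + q*(q powr (-\<tau>) - q powr \<tau>)*(aa q n * q^(n-1) * pr q \<tau> (n-1) lam)"
  define A0 where "A0 = q*(aa q n * q^(n-1) * pr q \<tau> (n-1) lam) + q*(q^n * aa q (n+1) * pr q \<tau> (n+1) lam)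
     - q*(q powr (-\<tau>) - q powr \<tau>)*(q^n*q^n*pr q \<tau> n lam)"
  have e2: "exp (2 * \<i> * complex_of_real \<phi>) = EE \<phi>^2"
  proof -
    have "2 * \<i> * complex_of_real \<phi> = of_nat 2 * (\<i> * complex_of_real \<phi>)" by simp
    then show ?thesis unfolding EE_def by (simp only: exp_of_nat_mult)
  qed
  have em2: "exp (- 2 * \<i> * complex_of_real \<phi>) = inverse (EE \<phi>)^2"
  proof -
    have "- 2 * \<i> * complex_of_real \<phi> = - (2 * \<i> * complex_of_real \<phi>)" by simp
    then show ?thesis using e2 by (simp add: exp_minus power_inverse)
  qed
  have L: "2 * opR q \<tau> \<sigma> \<phi> (vvec q \<tau> \<phi> lam) n
     = \<i>^n * EE \<phi>^n * (EE \<phi>^2 * of_real Ap + inverse (EE \<phi>)^2 * of_real Am + of_real (q powr (- \<sigma>) - q powr \<sigma>) * of_real A0)"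
    unfolding opR_def Let_def c_AA[OF q l] c_AdAd[OF q l] c_CC[OF q l] c_CdCd[OF q l] c_CdC[OF q l]
      c_AdC[OF q l] c_AdCd[OF q l] c_CdA[OF q l] c_CA[OF q l]
    unfolding Ap_def Am_def A0_def
    by (simp add: algebra_simps)
  have R: "complex_of_real q * exp (- 2 * \<i> * complex_of_real \<phi>) * vvec q \<tau> \<phi> (lam * q^2) n
       + complex_of_real (1 / q) * exp (2 * \<i> * complex_of_real \<phi>)
           * complex_of_real ((1 - q powr (- 2 * \<tau>) * lam) * (1 + lam)) * vvec q \<tau> \<phi> (lam / q^2) n
       + complex_of_real (lam * q powr (1 - \<tau>) * (q powr (- \<sigma>) - q powr \<sigma>)) * vvec q \<tau> \<phi> lam n
     = \<i>^n * EE \<phi>^n * (EE \<phi>^2 * of_real ((1/q) * ((1 - q powr (-2*\<tau>)*lam)*(1+lam)) * pr q \<tau> n (lam/q^2))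
          + inverse (EE \<phi>)^2 * of_real (q * pr q \<tau> n (lam*q^2)) + of_real (q powr (- \<sigma>) - q powr \<sigma>) * of_real (lam * q powr (1-\<tau>) * pr q \<tau> n lam))"
    unfolding e2 em2 vv[OF q l] vv[OF q l1(1)] vv[OF q l1(2)]
    by (simp add: algebra_simps)
  show "2 * opR q \<tau> \<sigma> \<phi> (vvec q \<tau> \<phi> lam) n =
    complex_of_real q * exp (- 2 * \<i> * complex_of_real \<phi>) * vvec q \<tau> \<phi> (lam * q^2) n
       + complex_of_real (1 / q) * exp (2 * \<i> * complex_of_real \<phi>)
           * complex_of_real ((1 - q powr (- 2 * \<tau>) * lam) * (1 + lam)) * vvec q \<tau> \<phi> (lam / q^2) n
       + complex_of_real (lam * q powr (1 - \<tau>) * (q powr (- \<sigma>) - q powr \<sigma>)) * vvec q \<tau> \<phi> lam n"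
    unfolding L R Ap_def Am_def A0_def Ipr[OF q] Imr[OF q] I0r[OF q] ..
qed


end
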